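(* Let $h\ge1$ be real. There is a unique sequence of positive real numbers $(r_n)_{n\ge1}$ satisfying $$r_n=hn-1+\frac{n^2}{r_{n+1}}\qquad\text{for all } n\ge1.$$ Moreover, this sequence satisfies, for all $n\ge1$, $$0<r_n-\alpha n+c<\frac{(\alpha-c)(c-1)}{\alpha n},$$ where $\alpha=\dfrac{h+\sqrt{h^2+4}}{2}$ and $c=\dfrac{1+\alpha}{2\alpha-h}=\dfrac12+\dfrac{h+2}{2\sqrt{h^2+4}}$. *)

theory Defs
  imports Complex_Main
begin

end

theory Submission
  imports Defs
begin

fun Ap :: "real \<Rightarrow> real \<Rightarrow> real \<Rightarrow> nat \<Rightarrow> nat \<Rightarrow> real" where
  "Ap h a c 0 n = a * real n - c"
| "Ap h a c (Suc m) n = h * real n - 1 + (real n)\<^sup>2 / Ap h a c m (Suc n)"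

locale P =
  fixes h a c e :: real
  assumes a1: "a > 1" and e0: "e > 0" and ce: "c = 1 + e"
    and ha: "h = a - 1/a" and ace: "a - c = a*a*e"
begin

lemma step:
  fixes n x :: real
  assumes n: "n \<ge> 1" and xl: "a*(n+1) - c \<le> x" and xu: "x \<le> a*(n+1) - c + a*e*e/(n+1)"
  shows "a*n - c < h*n - 1 + n\<^sup>2/x \<and> h*n - 1 + n\<^sup>2/x < a*n - c + a*e*e/n"
proof -
  have Lid: "a*(n+1) - c = a*n + a*a*e" using ace by (simp add: algebra_simps)
  have Lp: "a*n + a*a*e > 0" using a1 e0 n by (simp add: add_pos_pos)
  have xp: "x > 0" using xl Lid Lp by linarith
  have base: "h*n - 1 + n\<^sup>2/x - (a*n - c) = (e - n/a) + n\<^sup>2/x"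
    unfolding ha ce using a1 by (simp add: field_simps)
  have up1: "n\<^sup>2/x \<le> n\<^sup>2/(a*n + a*a*e)"
    using xl Lid Lp by (intro divide_left_mono) auto
  have id1: "(e - n/a) + n^2/(a*n+a*a*e) - a*e*e/n = - (a*a*e*e/a)*(a*a*e)/(n*(a*n+a*a*e))"
    using Lp a1 e0 n by (simp add: field_simps power2_eq_square)
  have "(a*a*e*e/a)*(a*a*e)/(n*(a*n+a*a*e)) > 0"
    using Lp a1 e0 n by (intro divide_pos_pos mult_pos_pos) auto
  then have upper: "h*n - 1 + n\<^sup>2/x < a*n - c + a*e*e/n"
    using id1 up1 base by linarith
  define U where "U = a*n + a*a*e + a*e*e/(n+1)"
  have Up: "U > 0" unfolding U_def using Lp a1 e0 n by (simp add: add_pos_nonneg)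
  have lo1: "n\<^sup>2/U \<le> n\<^sup>2/x"
    using xu Lid xp unfolding U_def by (intro divide_left_mono) auto
  have id2: "n\<^sup>2 - (n/a - e)*U = a*a*e*e - (n/a - e)*(a*e*e)/(n+1)"
  proof -
    have "n + 1 > 0" "a > 0" "a + a*n > 0" using n a1 by (auto simp: add_pos_pos)
    then show ?thesis unfolding U_def by (simp add: field_simps power2_eq_square)
  qed
  have t1: "(n/a - e)*(a*e*e)/(n+1) \<le> (n/a)*(a*e*e)/(n+1)"
    using e0 a1 n by (intro divide_right_mono mult_right_mono) auto
  have t2: "(n/a)*(a*e*e)/(n+1) = e*e * (n/(n+1))" using a1 n by (simp add: field_simps)
  have t3: "n/(n+1) < 1" using n by simp
  have t4: "e*e * (n/(n+1)) < e*e" using mult_strict_left_mono[OF t3, of "e*e"] e0 by simp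
  have aa: "1 \<le> a*a" using a1 by (smt (verit) mult_le_cancel_left1)
  have t5: "e*e \<le> a*a*e*e" using mult_right_mono[OF aa, of "e*e"] e0 by (simp add: mult.assoc)
  have "n\<^sup>2 - (n/a - e)*U > 0" using id2 t1 t2 t4 t5 by linarith
  then have "n\<^sup>2/U > n/a - e" using Up by (simp add: field_simps)
  then have lower: "a*n - c < h*n - 1 + n\<^sup>2/x" using lo1 base by linarith
  show ?thesis using upper lower by blast
qed

lemma contr:
  fixes n x y :: real
  assumes n: "n > 0" and x: "x \<ge> a*n" and y: "y \<ge> n"
  shows "\<bar>n\<^sup>2/x - n\<^sup>2/y\<bar> \<le> \<bar>x - y\<bar>/a"
proof -
  have xp: "x > 0" using x n a1 by (smt (verit) mult_le_cancel_right1)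
  have yp: "y > 0" using y n by simp
  have e: "n\<^sup>2/x - n\<^sup>2/y = n\<^sup>2*(y - x)/(x*y)" using xp yp by (simp add: field_simps)
  have "a*n*n \<le> x*y" using x y n a1 xp by (intro mult_mono) auto
  then have "n\<^sup>2/(x*y) \<le> 1/a" using xp yp a1 n by (simp add: field_simps power2_eq_square)
  then have "n\<^sup>2/(x*y) * \<bar>x - y\<bar> \<le> 1/a * \<bar>x - y\<bar>" by (intro mult_right_mono) auto
  moreover have "\<bar>n\<^sup>2/x - n\<^sup>2/y\<bar> = n\<^sup>2/(x*y) * \<bar>x - y\<bar>"
    unfolding e using xp yp by (simp add: abs_mult abs_minus_commute)
  ultimately show ?thesis by simp
qed

lemma Ap_bounds:
  assumes "n \<ge> 1"
  shows "a * real n - c \<le> Ap h a c m n \<and> Ap h a c m n \<le> a * real n - c + a*e*e/real n"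
  using assms
proof (induction m arbitrary: n)
  case 0
  have "a*e*e/real n \<ge> 0" using a1 e0 by simp
  then show ?case by simp
next
  case (Suc m)
  have IH: "a * real (Suc n) - c \<le> Ap h a c m (Suc n) \<and> Ap h a c m (Suc n) \<le> a * real (Suc n) - c + a*e*e/real (Suc n)"
    using Suc.IH[of "Suc n"] by simp
  have n1: "real n \<ge> 1" using Suc.prems by simp
  have "a*real n - c < h*real n - 1 + (real n)\<^sup>2/Ap h a c m (Suc n) \<and> h*real n - 1 + (real n)\<^sup>2/Ap h a c m (Suc n) < a*real n - c + a*e*e/real n"
    using IH n1 by (intro step) (auto simp: add.commute)
  then show ?case by simp
qed

lemma Ap_diff:
  assumes "n \<ge> 1"
  shows "\<bar>Ap h a c (Suc m) n - Ap h a c m n\<bar> \<le> a*e*e / a^m"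
  using assms
proof (induction m arbitrary: n)
  case 0
  have b1: "a * real n - c \<le> Ap h a c (Suc 0) n \<and> Ap h a c (Suc 0) n \<le> a * real n - c + a*e*e/real n"
    using Ap_bounds[OF 0] by blast
  have b0: "a * real n - c \<le> Ap h a c 0 n \<and> Ap h a c 0 n \<le> a * real n - c + a*e*e/real n"
    using Ap_bounds[OF 0] by blast
  have "a*e*e/real n \<le> a*e*e/1" using 0 a1 e0
    by (intro divide_left_mono) auto
  then show ?case using b0 b1 by simp
next
  case (Suc m)
  have n: "real n \<ge> 1" using Suc.prems by simp
  let ?x = "Ap h a c (Suc m) (Suc n)" and ?y = "Ap h a c m (Suc n)"
  have bx: "a * real (Suc n) - c \<le> ?x" using Ap_bounds[of "Suc n" "Suc m"] by (simp del: Ap.simps)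
  have by': "a * real (Suc n) - c \<le> ?y" using Ap_bounds[of "Suc n" m] by (simp del: Ap.simps)
  have L: "a * real (Suc n) - c = a * real n + a*a*e" using ace by (simp add: algebra_simps)
  have ae: "a*a*e > 0" using a1 e0 by simp
  have an: "a * real n \<ge> real n" using a1 n by simp
  have "\<bar>(real n)\<^sup>2/?x - (real n)\<^sup>2/?y\<bar> \<le> \<bar>?x - ?y\<bar>/a"
  proof (rule contr)
    show "real n > 0" using n by simp
    show "a * real n \<le> ?x" using bx L ae by linarith
    show "real n \<le> ?y" using by' L ae an by linarith
  qed
  also have "\<dots> \<le> (a*e*e/a^m)/a"
    using Suc.IH[of "Suc n"] a1 by (intro divide_right_mono) auto
  finally show ?case by simp
qed

lemma Ap_conv:
  assumes "n \<ge> 1"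
  shows "convergent (\<lambda>m. Ap h a c m n)"
proof -
  have g: "summable (\<lambda>m. a*e*e * (1/a)^m)"
    using a1 by (intro summable_mult summable_geometric) auto
  have "summable (\<lambda>m. Ap h a c (Suc m) n - Ap h a c m n)"
  proof (rule summable_comparison_test[OF _ g], intro exI allI impI)
    fix m :: nat
    show "norm (Ap h a c (Suc m) n - Ap h a c m n) \<le> a*e*e * (1/a)^m"
      using Ap_diff[OF assms, of m] by (simp del: Ap.simps add: power_one_over)
  qed
  then have "convergent (\<lambda>m. \<Sum>k<m. Ap h a c (Suc k) n - Ap h a c k n)"
    by (simp del: Ap.simps add: summable_iff_convergent)
  moreover have tel: "\<And>m. (\<Sum>k<m. Ap h a c (Suc k) n - Ap h a c k n) = Ap h a c m n - Ap h a c 0 n"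
    by (rule sum_lessThan_telescope)
  ultimately have "convergent (\<lambda>m. Ap h a c m n - Ap h a c 0 n)" by (simp del: Ap.simps)
  then have "convergent (\<lambda>m. (Ap h a c m n - Ap h a c 0 n) + Ap h a c 0 n)"
    by (intro convergent_add convergent_const)
  then show ?thesis by (simp del: Ap.simps)
qed

definition R :: "nat \<Rightarrow> real" where "R n = lim (\<lambda>m. Ap h a c m n)"

lemma R_lim: "n \<ge> 1 \<Longrightarrow> (\<lambda>m. Ap h a c m n) \<longlonglongrightarrow> R n"
  unfolding R_def using Ap_conv convergent_LIMSEQ_iff by blast

lemma R_bounds:
  assumes "n \<ge> 1"
  shows "a * real n - c \<le> R n \<and> R n \<le> a * real n - c + a*e*e/real n"
proof
  show "a * real n - c \<le> R n"
    by (rule LIMSEQ_le_const[OF R_lim[OF assms]]) (use Ap_bounds[OF assms] in blast)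
  show "R n \<le> a * real n - c + a*e*e/real n"
    by (rule LIMSEQ_le_const2[OF R_lim[OF assms]]) (use Ap_bounds[OF assms] in blast)
qed

lemma R_rec:
  assumes "n \<ge> 1"
  shows "R n = h * real n - 1 + (real n)\<^sup>2 / R (Suc n)"
proof -
  have b: "a * real (Suc n) - c \<le> R (Suc n)" using R_bounds[of "Suc n"] by (metis One_nat_def Suc_le_mono le0)
  have "a * real (Suc n) - c = a * real n + a*a*e" using ace by (simp add: algebra_simps)
  moreover have "a * real n + a*a*e > 0" using a1 e0 by (simp add: add_nonneg_pos)
  ultimately have nz: "R (Suc n) \<noteq> 0" using b by linarith
  have "(\<lambda>m. Ap h a c (Suc m) n) \<longlonglongrightarrow> R n" using LIMSEQ_Suc[OF R_lim[OF assms]] .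
  moreover have "(\<lambda>m. Ap h a c (Suc m) n) \<longlonglongrightarrow> h * real n - 1 + (real n)\<^sup>2 / R (Suc n)"
    unfolding Ap.simps using R_lim[of "Suc n"] nz by (intro tendsto_intros) auto
  ultimately show ?thesis by (rule LIMSEQ_unique)
qed

lemma R_strict:
  assumes "n \<ge> 1"
  shows "a * real n - c < R n \<and> R n < a * real n - c + a*e*e/real n"
proof -
  have b: "a * real (Suc n) - c \<le> R (Suc n) \<and> R (Suc n) \<le> a * real (Suc n) - c + a*e*e/real (Suc n)"
    using R_bounds[of "Suc n"] by (metis One_nat_def Suc_le_mono le0)
  have "a*real n - c < h*real n - 1 + (real n)\<^sup>2/R (Suc n) \<and> h*real n - 1 + (real n)\<^sup>2/R (Suc n) < a*real n - c + a*e*e/real n"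
    using b assms by (intro step) (auto simp: add.commute)
  then show ?thesis using R_rec[OF assms] by simp
qed

lemma R_pos: "n \<ge> 1 \<Longrightarrow> R n > 0"
proof -
  assume n: "n \<ge> 1"
  have "a * real n - c = a * (real n - 1) + a*a*e" using ace by (simp add: algebra_simps)
  moreover have "a * (real n - 1) \<ge> 0" using a1 n by simp
  moreover have "a*a*e > 0" using a1 e0 by simp
  ultimately show ?thesis using R_strict[OF n] by linarith
qed

lemma uniq:
  assumes h1: "h \<ge> 1"
    and S: "\<forall>n\<ge>1. s n > 0 \<and> s n = h * real n - 1 + (real n)\<^sup>2 / s (n + 1)"
    and n: "n \<ge> 1"
  shows "s n = R n"
proof -
  have Sp: "s k > 0" if "k \<ge> 1" for k using S that by blast
  have Se: "s k = h * real k - 1 + (real k)\<^sup>2 / s (Suc k)" if "k \<ge> 1" for k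
    using S that by (metis Suc_eq_plus1)
  have sgt: "s (Suc k) > real k" if k: "k \<ge> 1" for k
  proof -
    have "s (Suc k) = h * real (Suc k) - 1 + (real (Suc k))\<^sup>2 / s (Suc k + 1)"
      using Se[of "Suc k"] by simp
    moreover have "s (Suc k + 1) > 0" using Sp[of "Suc k + 1"] by simp
    moreover have "h * real (Suc k) \<ge> real (Suc k)" using h1 by simp
    moreover have "(real (Suc k))\<^sup>2 / s (Suc k + 1) > 0" using calculation(2) by simp
    ultimately show ?thesis by linarith
  qed
  have slt: "s k < (h+1) * real k" if k: "k \<ge> 1" for k
  proof -
    have sk: "s k = h * real k - 1 + (real k)\<^sup>2 / s (Suc k)" using Se[OF k] by simp
    have "(real k)\<^sup>2 / s (Suc k) < (real k)\<^sup>2 / real k"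
      using sgt[OF k] k by (intro divide_strict_left_mono) auto
    also have "\<dots> = real k" by (simp add: power2_eq_square)
    finally show ?thesis using sk by (simp add: algebra_simps)
  qed
  define K where "K = a + a*e*e + h + 1"
  have dK: "\<bar>s k - R k\<bar> \<le> K * real k" if k: "k \<ge> 1" for k
  proof -
    have r: "a * real k - c < R k \<and> R k < a * real k - c + a*e*e/real k" using R_strict[OF k] .
    have rp: "R k > 0" using R_pos[OF k] .
    have sp: "s k > 0" using Sp[OF k] .
    have c0: "c > 0" using ce e0 by simp
    have q: "a*e*e/real k \<le> a*e*e * real k"
    proof -
      have "a*e*e/real k \<le> a*e*e/1" using k a1 e0 by (intro divide_left_mono) auto
      also have "\<dots> \<le> a*e*e * real k" using k a1 e0 by simp
      finally show ?thesis .
    qed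
    have "\<bar>s k - R k\<bar> \<le> s k + R k" using rp sp by simp
    also have "\<dots> \<le> (h+1) * real k + (a * real k + a*e*e*real k)"
      using slt[OF k] r q c0 by linarith
    also have "\<dots> = K * real k" unfolding K_def by (simp add: algebra_simps)
    finally show ?thesis .
  qed
  have dstep: "\<bar>s k - R k\<bar> \<le> \<bar>s (Suc k) - R (Suc k)\<bar> / a" if k: "k \<ge> 1" for k
  proof -
    have e1: "s k - R k = (real k)\<^sup>2 / s (Suc k) - (real k)\<^sup>2 / R (Suc k)"
      using Se[OF k] R_rec[OF k] by simp
    have b: "a * real (Suc k) - c < R (Suc k)" using R_strict[of "Suc k"] by simp
    have "a * real (Suc k) - c = a * real k + a*a*e" using ace by (simp add: algebra_simps)
    moreover have "a*a*e > 0" using a1 e0 by simp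
    ultimately have rb: "R (Suc k) \<ge> a * real k" using b by linarith
    have "\<bar>(real k)\<^sup>2 / R (Suc k) - (real k)\<^sup>2 / s (Suc k)\<bar> \<le> \<bar>R (Suc k) - s (Suc k)\<bar> / a"
      by (rule contr) (use k rb sgt[OF k] in auto)
    then show ?thesis unfolding e1 by (simp add: abs_minus_commute)
  qed
  have main: "\<bar>s k - R k\<bar> \<le> K * real (k + m) / a^m" if k: "k \<ge> 1" for k m
    using k
  proof (induction m arbitrary: k)
    case 0 then show ?case using dK by simp
  next
    case (Suc m)
    have "\<bar>s k - R k\<bar> \<le> \<bar>s (Suc k) - R (Suc k)\<bar> / a" using dstep[OF Suc.prems] .
    also have "\<dots> \<le> (K * real (Suc k + m) / a^m) / a"
      using Suc.IH[of "Suc k"] a1 by (intro divide_right_mono) auto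
    also have "\<dots> = K * real (k + Suc m) / a^Suc m" by (simp add: field_simps)
    finally show ?case .
  qed
  have lim0: "(\<lambda>m. K * real n * (1/a)^m + K * (real m * (1/a)^m)) \<longlonglongrightarrow> 0"
  proof -
    have q: "norm (1/a) < 1" using a1 by simp
    have "(\<lambda>m. K * real n * (1/a)^m + K * (real m * (1/a)^m)) \<longlonglongrightarrow> K * real n * 0 + K * 0"
      by (intro tendsto_intros LIMSEQ_power_zero powser_times_n_limit_0 q)
    then show ?thesis by simp
  qed
  have "\<bar>s n - R n\<bar> \<le> 0"
  proof (rule LIMSEQ_le_const[OF lim0], intro exI allI impI)
    fix m :: nat
    have "\<bar>s n - R n\<bar> \<le> K * real (n + m) / a^m" using main[OF n] .
    also have "\<dots> = K * real n * (1/a)^m + K * (real m * (1/a)^m)"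
      by (simp add: field_simps power_one_over add_divide_distrib)
    finally show "\<bar>s n - R n\<bar> \<le> K * real n * (1/a)^m + K * (real m * (1/a)^m)" .
  qed
  then show ?thesis by simp
qed

end

theorem lemma3:
  fixes h :: real
  assumes "h \<ge> 1"
  defines "\<alpha> \<equiv> (h + sqrt (h\<^sup>2 + 4)) / 2"
  defines "c \<equiv> (1 + \<alpha>) / (2 * \<alpha> - h)"
  shows "c = 1/2 + (h + 2) / (2 * sqrt (h\<^sup>2 + 4))
    \<and> (\<exists>r :: nat \<Rightarrow> real.
        (\<forall>n\<ge>1. r n > 0 \<and> r n = h * real n - 1 + (real n)\<^sup>2 / r (n + 1))
      \<and> (\<forall>s :: nat \<Rightarrow> real.
            (\<forall>n\<ge>1. s n > 0 \<and> s n = h * real n - 1 + (real n)\<^sup>2 / s (n + 1))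
            \<longrightarrow> (\<forall>n\<ge>1. s n = r n))
      \<and> (\<forall>n\<ge>1. 0 < r n - \<alpha> * real n + c
              \<and> r n - \<alpha> * real n + c < (\<alpha> - c) * (c - 1) / (\<alpha> * real n)))"
proof -
  define S where "S = sqrt (h\<^sup>2 + 4)"
  have SS: "S * S = h\<^sup>2 + 4" unfolding S_def by (simp add: add_nonneg_nonneg)
  have S0: "S \<ge> 0" unfolding S_def by simp
  have h0: "h > 0" using assms(1) by simp
  have S2: "S > 2"
  proof -
    have "h\<^sup>2 + 4 > 2\<^sup>2" using h0 by simp
    then have "sqrt (h\<^sup>2 + 4) > sqrt (2\<^sup>2)" by (rule real_sqrt_less_mono)
    then show ?thesis unfolding S_def by simp
  qed
  have Sh: "S < h + 2"
  proof -
    have "h\<^sup>2 + 4 < (h+2)\<^sup>2" using h0 by (simp add: power2_eq_square algebra_simps)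
    then have "sqrt (h\<^sup>2 + 4) < sqrt ((h+2)\<^sup>2)" by (rule real_sqrt_less_mono)
    then show ?thesis unfolding S_def using h0 by simp
  qed
  have ad: "\<alpha> = (h + S)/2" unfolding \<alpha>_def S_def ..
  have a1: "\<alpha> > 1" using ad S2 h0 by simp
  have aS: "2*\<alpha> - h = S" using ad by simp
  have cd: "c = (1+\<alpha>)/S" unfolding c_def aS ..
  have aa: "\<alpha> * \<alpha> = h * \<alpha> + 1" unfolding ad using SS by (simp add: field_simps power2_eq_square)
  have ha: "h = \<alpha> - 1/\<alpha>" using aa a1 by (simp add: field_simps)
  have aSa: "\<alpha> * S = \<alpha>*\<alpha> + 1"
  proof -
    have "\<alpha> * S = \<alpha>*(2*\<alpha> - h)" using aS by simp
    also have "\<dots> = 2*(\<alpha>*\<alpha>) - h*\<alpha>" by (simp add: algebra_simps)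
    finally show ?thesis using aa by linarith
  qed
  have Sn: "S \<noteq> 0" using S2 by simp
  have an: "\<alpha> \<noteq> 0" using a1 by simp
  have cprod: "c * (\<alpha>*\<alpha> + 1) = \<alpha> * (\<alpha> + 1)"
  proof -
    have "c * (\<alpha>*\<alpha> + 1) = ((1+\<alpha>)/S) * (\<alpha> * S)" using aSa cd by simp
    also have "\<dots> = \<alpha> * (\<alpha> + 1)" using Sn by simp
    finally show ?thesis .
  qed
  have ace: "\<alpha> - c = \<alpha>*\<alpha>*(c - 1)" using cprod by (simp add: algebra_simps)
  have c1: "c > 1"
  proof -
    have "2*\<alpha> = h + S" using ad by simp
    then have "1 + \<alpha> > S" using Sh by linarith
    then show ?thesis unfolding cd using S2 by simp
  qed
  interpret P h \<alpha> c "c - 1"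
    by unfold_locales (use a1 c1 ha ace in auto)
  have c_eq: "c = 1/2 + (h + 2) / (2 * S)"
  proof -
    have "1 + \<alpha> = S/2 + (h+2)/2" using ad by (simp add: field_simps)
    then have "(1+\<alpha>)/S = (S/2)/S + ((h+2)/2)/S" by (simp add: add_divide_distrib)
    also have "\<dots> = 1/2 + (h + 2) / (2 * S)" using Sn by simp
    finally show ?thesis using cd by simp
  qed
  have bnd: "(\<alpha> - c) * (c - 1) / (\<alpha> * real n) = \<alpha>*(c-1)*(c-1)/real n" for n
  proof -
    have "(\<alpha> - c) * (c - 1) / (\<alpha> * real n) = (\<alpha>*\<alpha>*(c - 1)) * (c - 1) / (\<alpha> * real n)" using ace by simp
    also have "\<dots> = (\<alpha>*(c - 1) * (c - 1)) * \<alpha> / (real n * \<alpha>)" by (simp add: ac_simps)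
    also have "\<dots> = \<alpha>*(c-1)*(c-1)/real n" using an by simp
    finally show ?thesis .
  qed
  show ?thesis
  proof (intro conjI exI[of _ R])
    show "c = 1/2 + (h + 2) / (2 * sqrt (h\<^sup>2 + 4))" using c_eq unfolding S_def .
    show "\<forall>n\<ge>1. R n > 0 \<and> R n = h * real n - 1 + (real n)\<^sup>2 / R (n + 1)"
    proof (intro allI impI conjI)
      fix n :: nat assume n: "n \<ge> 1"
      show "R n > 0" using R_pos[OF n] .
      show "R n = h * real n - 1 + (real n)\<^sup>2 / R (n + 1)" using R_rec[OF n] by (simp only: Suc_eq_plus1)
    qed
    show "\<forall>s :: nat \<Rightarrow> real.
            (\<forall>n\<ge>1. s n > 0 \<and> s n = h * real n - 1 + (real n)\<^sup>2 / s (n + 1))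
            \<longrightarrow> (\<forall>n\<ge>1. s n = R n)"
      using uniq[OF assms(1)] by blast
    show "\<forall>n\<ge>1. 0 < R n - \<alpha> * real n + c
              \<and> R n - \<alpha> * real n + c < (\<alpha> - c) * (c - 1) / (\<alpha> * real n)"
    proof (intro allI impI)
      fix n :: nat assume n: "n \<ge> 1"
      show "0 < R n - \<alpha> * real n + c
              \<and> R n - \<alpha> * real n + c < (\<alpha> - c) * (c - 1) / (\<alpha> * real n)"
        unfolding bnd using R_strict[OF n] by linarith
    qed
  qed
qed

end
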